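(* For every $\beta\in\mathbb{C}$, the linear map $\mathrm{d}_{1-\beta,\beta}:\mathcal{W}\to\mathcal{F}_{1-\beta}\otimes\mathcal{F}_\beta$ defined by $$\mathrm{d}_{1-\beta,\beta}(L_n)=\begin{cases}\sum_{i=0}^{n-1}(i-n\beta)v_i\otimes v_{n-i},&n\geq1;\\ 0,&n=0;\\ -\sum_{i=n}^{-1}(i-n\beta)v_i\otimes v_{n-i},&n\leq -1\end{cases}$$ is a 1-cocycle which is not a 1-coboundary.
   Context: The Witt algebra $\mathcal{W}$ has basis $\{L_n\mid n\in\mathbb{Z}\}$ and bracket $[L_m,L_n]=(m-n)L_{m+n}$. $\mathcal{F}_\alpha$ has basis $\{v_n\}$ with $L_m\cdot v_n=-(\alpha m+n)v_{m+n}$; $\mathcal{F}_\alpha\otimes\mathcal{F}_\beta$ is a $\mathcal{W}$-module via $L_m\cdot(v_i\otimes v_j)=-(i+\alpha m)v_{m+i}\otimes v_j-(j+\beta m)v_i\otimes v_{m+j}$. A 1-cocycle is a linear map $d$ with $d([x,y])=x\cdot d(y)-y\cdot d(x)$; a 1-coboundary is a map $x\mapsto x\cdot v$ for a fixed $v$ in the module. *)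

theory Defs
  imports Complex_Main
begin

text \<open>Elements of the Witt algebra W are finitely supported coefficient functions
  x :: int \<Rightarrow> complex, representing \<Sum>n. x n L_n.  Elements of
  F_alpha \<otimes> F_beta are finitely supported functions v :: int \<times> int \<Rightarrow> complex,
  representing \<Sum>(i,j). v (i,j) v_i \<otimes> v_j.\<close>

definition supp :: "('a \<Rightarrow> complex) \<Rightarrow> 'a set" where
  "supp f = {k. f k \<noteq> 0}"

definition Witt :: "(int \<Rightarrow> complex) set" where
  "Witt = {x. finite (supp x)}"

definition TensorMod :: "(int \<times> int \<Rightarrow> complex) set" where
  "TensorMod = {v. finite (supp v)}"

definition L :: "int \<Rightarrow> int \<Rightarrow> complex" where
  "L n = (\<lambda>k. if k = n then 1 else 0)"

definition witt_bracket :: "(int \<Rightarrow> complex) \<Rightarrow> (int \<Rightarrow> complex) \<Rightarrow> (int \<Rightarrow> complex)" where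
  "witt_bracket x y = (\<lambda>k. \<Sum>m\<in>supp x. \<Sum>n\<in>supp y.
       if m + n = k then of_int (m - n) * x m * y n else 0)"

text \<open>Coefficient of v_i \<otimes> v_j in L_m \<cdot> (v_a \<otimes> v_b) =
  -(a + alpha m) v_{m+a} \<otimes> v_b - (b + beta m) v_a \<otimes> v_{m+b}.\<close>
definition act_coeff :: "complex \<Rightarrow> complex \<Rightarrow> int \<Rightarrow> int \<times> int \<Rightarrow> int \<times> int \<Rightarrow> complex" where
  "act_coeff \<alpha> \<beta> m ab ij =
     (case ab of (a, b) \<Rightarrow> case ij of (i, j) \<Rightarrow>
        (if i = m + a \<and> j = b then - (of_int a + \<alpha> * of_int m) else 0)
      + (if i = a \<and> j = m + b then - (of_int b + \<beta> * of_int m) else 0))"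

definition tensor_act :: "complex \<Rightarrow> complex \<Rightarrow> (int \<Rightarrow> complex) \<Rightarrow> (int \<times> int \<Rightarrow> complex) \<Rightarrow> (int \<times> int \<Rightarrow> complex)" where
  "tensor_act \<alpha> \<beta> x v = (\<lambda>ij. \<Sum>m\<in>supp x. \<Sum>ab\<in>supp v. x m * v ab * act_coeff \<alpha> \<beta> m ab ij)"

definition is_1cocycle :: "complex \<Rightarrow> complex \<Rightarrow> ((int \<Rightarrow> complex) \<Rightarrow> (int \<times> int \<Rightarrow> complex)) \<Rightarrow> bool" where
  "is_1cocycle \<alpha> \<beta> d \<longleftrightarrow>
     (\<forall>x\<in>Witt. \<forall>y\<in>Witt. d (witt_bracket x y) = tensor_act \<alpha> \<beta> x (d y) - tensor_act \<alpha> \<beta> y (d x))"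

definition is_1coboundary :: "complex \<Rightarrow> complex \<Rightarrow> ((int \<Rightarrow> complex) \<Rightarrow> (int \<times> int \<Rightarrow> complex)) \<Rightarrow> bool" where
  "is_1coboundary \<alpha> \<beta> d \<longleftrightarrow> (\<exists>v\<in>TensorMod. \<forall>x\<in>Witt. d x = tensor_act \<alpha> \<beta> x v)"

definition dL :: "complex \<Rightarrow> int \<Rightarrow> int \<times> int \<Rightarrow> complex" where
  "dL \<beta> n = (\<lambda>(i, j).
     if n \<ge> 1 then (if 0 \<le> i \<and> i \<le> n - 1 \<and> j = n - i then of_int i - of_int n * \<beta> else 0)
     else if n = 0 then 0
     else (if n \<le> i \<and> i \<le> -1 \<and> j = n - i then - (of_int i - of_int n * \<beta>) else 0))"

definition d_map :: "complex \<Rightarrow> (int \<Rightarrow> complex) \<Rightarrow> int \<times> int \<Rightarrow> complex" where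
  "d_map \<beta> x = (\<lambda>ij. \<Sum>n\<in>supp x. x n * dL \<beta> n ij)"

end

theory Submission
  imports Defs
begin


definition H :: "int \<Rightarrow> complex" where "H k = (if 0 \<le> k then 1 else 0)"

lemma dL_alt: "dL \<beta> n (i,j) = (if j = n - i then (of_int i - of_int n * \<beta>) * (H i - H (i - n)) else 0)"
  unfolding dL_def H_def by (auto simp: algebra_simps)

definition T :: "complex \<Rightarrow> complex \<Rightarrow> int \<Rightarrow> (int \<times> int \<Rightarrow> complex) \<Rightarrow> int \<times> int \<Rightarrow> complex" where
  "T \<alpha> \<beta> m v = (\<lambda>(i,j). - (of_int (i-m) + \<alpha> * of_int m) * v (i-m,j) - (of_int (j-m) + \<beta> * of_int m) * v (i,j-m))"

lemma basis_id:
  "of_int (m-n) * dL \<beta> (m+n) (i,j) = T (1-\<beta>) \<beta> m (dL \<beta> n) (i,j) - T (1-\<beta>) \<beta> n (dL \<beta> m) (i,j)"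
proof (cases "j = m + n - i")
  case True
  have e1: "i - m - n = i - (m+n)" "i - n - m = i - (m+n)" "m + n - i - m = n - i" "m + n - i - n = m - i" by simp_all
  show ?thesis unfolding T_def True
    by (simp add: dL_alt e1 algebra_simps)
next
  case False
  then show ?thesis unfolding T_def by (simp add: dL_alt)
qed



lemma act_alt: "act_coeff \<alpha> \<beta> m ab (i,j) =
   (if ab = (i-m, j) then - (of_int (i-m) + \<alpha> * of_int m) else 0)
 + (if ab = (i, j-m) then - (of_int (j-m) + \<beta> * of_int m) else 0)"
  by (cases ab) (auto simp: act_coeff_def)

lemma sum_delta_mult: "finite S \<Longrightarrow> supp v \<subseteq> S \<Longrightarrow>
  (\<Sum>ab\<in>S. v ab * (if ab = p then c else 0)) = v p * c"
proof -
  assume f: "finite S" and s: "supp v \<subseteq> S"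
  have "(\<Sum>ab\<in>S. v ab * (if ab = p then c else 0)) = (\<Sum>ab\<in>S. if ab = p then v p * c else 0)"
    by (rule sum.cong) auto
  also have "\<dots> = (if p \<in> S then v p * c else 0)" using f by (simp add: sum.delta')
  also have "\<dots> = v p * c" using s by (auto simp: supp_def)
  finally show ?thesis .
qed

lemma act_sum: assumes "finite S" "supp v \<subseteq> S"
  shows "(\<Sum>ab\<in>S. v ab * act_coeff \<alpha> \<beta> m ab ij) = T \<alpha> \<beta> m v ij"
proof -
  obtain i j where ij: "ij = (i,j)" by fastforce
  have "(\<Sum>ab\<in>S. v ab * act_coeff \<alpha> \<beta> m ab ij) =
     (\<Sum>ab\<in>S. v ab * (if ab = (i-m, j) then - (of_int (i-m) + \<alpha> * of_int m) else 0))
   + (\<Sum>ab\<in>S. v ab * (if ab = (i, j-m) then - (of_int (j-m) + \<beta> * of_int m) else 0))"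
    unfolding ij act_alt by (simp add: distrib_left sum.distrib)
  also have "\<dots> = T \<alpha> \<beta> m v ij"
    unfolding sum_delta_mult[OF assms] ij T_def by (simp add: algebra_simps)
  finally show ?thesis .
qed

lemma tensor_act_eq: assumes "finite (supp v)"
  shows "tensor_act \<alpha> \<beta> x v ij = (\<Sum>m\<in>supp x. x m * T \<alpha> \<beta> m v ij)"
  unfolding tensor_act_def
proof (rule sum.cong[OF refl])
  fix m
  have "(\<Sum>ab\<in>supp v. x m * v ab * act_coeff \<alpha> \<beta> m ab ij) = x m * (\<Sum>ab\<in>supp v. v ab * act_coeff \<alpha> \<beta> m ab ij)"
    by (simp add: sum_distrib_left mult.assoc)
  also have "\<dots> = x m * T \<alpha> \<beta> m v ij" using act_sum[OF assms order_refl] by simp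
  finally show "(\<Sum>ab\<in>supp v. x m * v ab * act_coeff \<alpha> \<beta> m ab ij) = x m * T \<alpha> \<beta> m v ij" .
qed

lemma d_map_super: "finite S \<Longrightarrow> supp x \<subseteq> S \<Longrightarrow> d_map \<beta> x ij = (\<Sum>k\<in>S. x k * dL \<beta> k ij)"
  unfolding d_map_def by (rule sum.mono_neutral_left) (auto simp: supp_def)

lemma dL_nz: "dL \<beta> n (i,j) \<noteq> 0 \<Longrightarrow> j = n - i \<and> \<bar>i\<bar> \<le> \<bar>n\<bar>"
  unfolding dL_def by (auto split: if_splits)

lemma finite_supp_dL: "finite (supp (dL \<beta> n))"
proof (rule finite_subset)
  show "supp (dL \<beta> n) \<subseteq> (\<lambda>i. (i, n-i)) ` {-\<bar>n\<bar>..\<bar>n\<bar>}"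
  proof
    fix p assume "p \<in> supp (dL \<beta> n)"
    then obtain i j where p: "p = (i,j)" and nz: "dL \<beta> n (i,j) \<noteq> 0" by (cases p) (auto simp: supp_def)
    from dL_nz[OF nz] show "p \<in> (\<lambda>i. (i, n-i)) ` {-\<bar>n\<bar>..\<bar>n\<bar>}" unfolding p by (auto intro!: image_eqI[where x=i])
  qed
qed simp

lemma finite_supp_d_map: assumes "finite (supp y)" shows "finite (supp (d_map \<beta> y))"
proof (rule finite_subset)
  show "supp (d_map \<beta> y) \<subseteq> (\<Union>n\<in>supp y. supp (dL \<beta> n))"
  proof
    fix p assume "p \<in> supp (d_map \<beta> y)"
    hence "(\<Sum>n\<in>supp y. y n * dL \<beta> n p) \<noteq> 0" by (simp add: supp_def d_map_def)
    then obtain n where "n \<in> supp y" "y n * dL \<beta> n p \<noteq> 0" by (rule sum.not_neutral_contains_not_neutral)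
    thus "p \<in> (\<Union>n\<in>supp y. supp (dL \<beta> n))" by (auto simp: supp_def)
  qed
  show "finite (\<Union>n\<in>supp y. supp (dL \<beta> n))" using assms finite_supp_dL by blast
qed


lemma T_lin: "T \<alpha> \<beta> m (d_map \<beta> y) ij = (\<Sum>n\<in>supp y. y n * T \<alpha> \<beta> m (dL \<beta> n) ij)"
proof -
  obtain i j where ij: "ij = (i,j)" by fastforce
  show ?thesis unfolding ij T_def d_map_def
    by (simp add: sum_distrib_left sum_subtractf[symmetric] algebra_simps)
qed


lemma bracket_eq: assumes "finite (supp x)" "finite (supp y)"
  shows "d_map \<beta> (witt_bracket x y) ij =
    (\<Sum>m\<in>supp x. \<Sum>n\<in>supp y. x m * y n * (of_int (m-n) * dL \<beta> (m+n) ij))"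
proof -
  define S where "S = (\<lambda>p. fst p + snd p) ` (supp x \<times> supp y)"
  have fS: "finite S" unfolding S_def using assms by simp
  have sub: "supp (witt_bracket x y) \<subseteq> S"
  proof
    fix k assume "k \<in> supp (witt_bracket x y)"
    hence "(\<Sum>m\<in>supp x. \<Sum>n\<in>supp y. if m + n = k then of_int (m - n) * x m * y n else 0) \<noteq> 0"
      by (simp add: supp_def witt_bracket_def)
    then obtain m where m: "m \<in> supp x" and
      s1: "(\<Sum>n\<in>supp y. if m + n = k then of_int (m - n) * x m * y n else (0::complex)) \<noteq> 0"
      by (rule sum.not_neutral_contains_not_neutral)
    from s1 obtain n where n: "n \<in> supp y" and "(if m + n = k then of_int (m - n) * x m * y n else (0::complex)) \<noteq> 0"
      by (rule sum.not_neutral_contains_not_neutral)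
    hence "m + n = k" by (auto split: if_splits)
    thus "k \<in> S" unfolding S_def using m n by force
  qed
  have "d_map \<beta> (witt_bracket x y) ij = (\<Sum>k\<in>S. witt_bracket x y k * dL \<beta> k ij)"
    by (rule d_map_super[OF fS sub])
  also have "\<dots> = (\<Sum>k\<in>S. \<Sum>m\<in>supp x. \<Sum>n\<in>supp y. if m + n = k then x m * y n * (of_int (m-n) * dL \<beta> k ij) else 0)"
    unfolding witt_bracket_def sum_distrib_right
  proof (intro sum.cong refl)
    fix k m n
    show "(if m + n = k then of_int (m - n) * x m * y n else 0) * dL \<beta> k ij =
      (if m + n = k then x m * y n * (of_int (m-n) * dL \<beta> k ij) else 0)" by simp
  qed
  also have "\<dots> = (\<Sum>m\<in>supp x. \<Sum>n\<in>supp y. \<Sum>k\<in>S. if m + n = k then x m * y n * (of_int (m-n) * dL \<beta> k ij) else 0)"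
    by (subst sum.swap, rule sum.cong[OF refl], rule sum.swap)
  also have "\<dots> = (\<Sum>m\<in>supp x. \<Sum>n\<in>supp y. x m * y n * (of_int (m-n) * dL \<beta> (m+n) ij))"
  proof (intro sum.cong refl)
    fix m n assume "m \<in> supp x" "n \<in> supp y"
    hence "m + n \<in> S" unfolding S_def by force
    thus "(\<Sum>k\<in>S. if m + n = k then x m * y n * (of_int (m-n) * dL \<beta> k ij) else 0) = x m * y n * (of_int (m-n) * dL \<beta> (m+n) ij)"
      using fS by (simp add: sum.delta)
  qed
  finally show ?thesis .
qed



lemma cocycle: "is_1cocycle (1 - \<beta>) \<beta> (d_map \<beta>)"
  unfolding is_1cocycle_def
proof (intro ballI ext)
  fix x y and ij :: "int \<times> int" assume x: "x \<in> Witt" and y: "y \<in> Witt"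
  have fx: "finite (supp x)" and fy: "finite (supp y)" using x y by (auto simp: Witt_def)
  obtain i j where ij: "ij = (i,j)" by fastforce
  have A: "tensor_act (1-\<beta>) \<beta> x (d_map \<beta> y) ij =
      (\<Sum>m\<in>supp x. \<Sum>n\<in>supp y. x m * y n * T (1-\<beta>) \<beta> m (dL \<beta> n) ij)"
    unfolding tensor_act_eq[OF finite_supp_d_map[OF fy]] T_lin
    by (simp add: sum_distrib_left mult.assoc)
  have B: "tensor_act (1-\<beta>) \<beta> y (d_map \<beta> x) ij =
      (\<Sum>m\<in>supp x. \<Sum>n\<in>supp y. x m * y n * T (1-\<beta>) \<beta> n (dL \<beta> m) ij)"
    unfolding tensor_act_eq[OF finite_supp_d_map[OF fx]] T_lin
    by (subst sum.swap) (simp add: sum_distrib_left mult.assoc mult.left_commute)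
  show "d_map \<beta> (witt_bracket x y) ij =
     (tensor_act (1 - \<beta>) \<beta> x (d_map \<beta> y) - tensor_act (1 - \<beta>) \<beta> y (d_map \<beta> x)) ij"
    unfolding fun_diff_def A B bracket_eq[OF fx fy] sum_subtractf[symmetric]
    unfolding ij basis_id by (simp add: algebra_simps)
qed

lemma supp_L: "supp (L n) = {n}" by (auto simp: supp_def L_def)

lemma d_map_L: "d_map \<beta> (L n) = dL \<beta> n"
  by (rule ext) (unfold d_map_def supp_L, simp add: L_def)

lemma tensor_act_L: "finite (supp v) \<Longrightarrow> tensor_act \<alpha> \<beta> (L n) v ij = T \<alpha> \<beta> n v ij"
  by (simp add: tensor_act_eq supp_L del: supp_def) (simp add: L_def)

lemma not_coboundary: "\<not> is_1coboundary (1 - \<beta>) \<beta> (d_map \<beta>)"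
proof
  assume "is_1coboundary (1 - \<beta>) \<beta> (d_map \<beta>)"
  then obtain v where v: "v \<in> TensorMod" and h: "\<forall>x\<in>Witt. d_map \<beta> x = tensor_act (1-\<beta>) \<beta> x v"
    unfolding is_1coboundary_def by blast
  have fv: "finite (supp v)" using v by (simp add: TensorMod_def)
  have key: "dL \<beta> n p = T (1-\<beta>) \<beta> n v p" for n p
  proof -
    have "L n \<in> Witt" by (simp add: Witt_def supp_L)
    hence "d_map \<beta> (L n) p = tensor_act (1-\<beta>) \<beta> (L n) v p" using h by simp
    thus ?thesis by (simp add: d_map_L tensor_act_L[OF fv])
  qed
  define R where "R = Max (insert 0 ((\<lambda>p. \<bar>fst p\<bar> + \<bar>snd p\<bar>) ` supp v))"
  have R0: "R \<ge> 0" unfolding R_def using fv by simp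
  have bnd: "\<bar>a\<bar> \<le> R \<and> \<bar>b\<bar> \<le> R" if "v (a,b) \<noteq> 0" for a b
  proof -
    have "(a,b) \<in> supp v" using that by (simp add: supp_def)
    hence "\<bar>a\<bar> + \<bar>b\<bar> \<le> R" unfolding R_def using fv
      by (intro Max_ge) force+
    thus ?thesis using abs_ge_zero[of a] abs_ge_zero[of b] by linarith
  qed
  define n where "n = 2*R + 4"
  have val: "of_int i - of_int n * \<beta> = 0" if "i = R+1 \<or> i = R+2" for i
  proof -
    have "dL \<beta> n (i, n-i) = of_int i - of_int n * \<beta>"
      using that R0 unfolding dL_def n_def by auto
    moreover have "v (i - n, n - i) = 0"
    proof (rule ccontr)
      assume "v (i - n, n - i) \<noteq> 0" from bnd[OF this] that show False unfolding n_def by auto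
    qed
    moreover have "v (i, n - i - n) = 0"
    proof (rule ccontr)
      assume "v (i, n - i - n) \<noteq> 0" from bnd[OF this] that show False by auto
    qed
    ultimately show ?thesis using key[of n "(i, n-i)"] by (simp add: T_def)
  qed
  have "of_int (R+2) - of_int n * \<beta> - (of_int (R+1) - of_int n * \<beta>) = (0::complex)"
    using val[of "R+1"] val[of "R+2"] by simp
  thus False by simp
qed

theorem propositionP1:
  fixes \<beta> :: complex
  shows "is_1cocycle (1 - \<beta>) \<beta> (d_map \<beta>) \<and> \<not> is_1coboundary (1 - \<beta>) \<beta> (d_map \<beta>)"
  using cocycle not_coboundary by blast


end
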